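(* For every prime power $q$, every integer $n\ge -1$ and every integer $k$ with $-1\le k\le\frac{n-1}{2}$, $$f(n,q)\le q^{2k+2}f(n-k-1,q)+f(k,q)+\Bigl(\sum_{i=0}^k q^i\Bigr)\Bigl(\sum_{j=k}^{n-2}q^j\Bigr).$$
   Context: $\mathrm{PG}(n,q)$ is the $n$-dimensional projective space over $\mathbb F_q$. A $(2,1)$-blocking set in $\mathrm{PG}(n,q)$ is a set of lines such that every plane contains at least one of them. For $n\ge -1$, $f(n,q)$ is the smallest possible size of a $(2,1)$-blocking set in $\mathrm{PG}(n,q)$; in particular $f(-1,q)=f(0,q)=f(1,q)=0$. Empty sums are $0$. *)

theory Defs
  imports Complex_Main "HOL-Library.Function_Algebras" "HOL-Library.Cardinality"
begin

text \<open>PG(n,F) is modelled by the vector space F^(n+1), realised as the functions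
  nat => F vanishing outside the indices 0..n. A projective subspace of projective
  dimension d corresponds to a linear subspace of (vector) dimension d+1.\<close>

definition scl :: "'a::field \<Rightarrow> (nat \<Rightarrow> 'a) \<Rightarrow> nat \<Rightarrow> 'a" where
  "scl c v = (\<lambda>i. c * v i)"

definition ambient :: "int \<Rightarrow> (nat \<Rightarrow> 'a::field) set" where
  "ambient n = {v. \<forall>i. n < int i \<longrightarrow> v i = 0}"

definition lin_sub :: "int \<Rightarrow> nat \<Rightarrow> (nat \<Rightarrow> 'a::field) set \<Rightarrow> bool" where
  "lin_sub n d W \<longleftrightarrow> W \<subseteq> ambient n \<and> module.subspace scl W \<and> vector_space.dim scl W = d"

definition blocking21 :: "'a::field itself \<Rightarrow> int \<Rightarrow> (nat \<Rightarrow> 'a) set set \<Rightarrow> bool" where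
  "blocking21 _ n B \<longleftrightarrow> (\<forall>L\<in>B. lin_sub n 2 L) \<and>
     (\<forall>P::(nat \<Rightarrow> 'a) set. lin_sub n 3 P \<longrightarrow> (\<exists>L\<in>B. L \<subseteq> P))"

text \<open>f(n,q) for q = CARD('a): minimum size of a (2,1)-blocking set in PG(n,'a).\<close>
definition fPG :: "'a::{field,finite} itself \<Rightarrow> int \<Rightarrow> nat" where
  "fPG T n = (LEAST m. \<exists>B. finite B \<and> blocking21 T n B \<and> card B = m)"

end

theory Submission
  imports Defs
begin


lemma vs_scl: "vector_space (scl :: 'a::field \<Rightarrow> (nat \<Rightarrow> 'a) \<Rightarrow> (nat \<Rightarrow> 'a))"
  by unfold_locales (auto simp: scl_def fun_eq_iff algebra_simps)

interpretation V: vector_space "scl :: 'a::field \<Rightarrow> (nat \<Rightarrow> 'a) \<Rightarrow> (nat \<Rightarrow> 'a)"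
  by (rule vs_scl)

lemma scl_app[simp]: "scl c v i = c * v i"
  by (simp add: scl_def)

definition ind2 :: "(nat \<Rightarrow> 'a::field) \<Rightarrow> (nat \<Rightarrow> 'a) \<Rightarrow> bool" where
  "ind2 x y \<longleftrightarrow> (\<forall>r s. scl r x + scl s y = 0 \<longrightarrow> r = 0 \<and> s = 0)"

definition ind3 :: "(nat \<Rightarrow> 'a::field) \<Rightarrow> (nat \<Rightarrow> 'a) \<Rightarrow> (nat \<Rightarrow> 'a) \<Rightarrow> bool" where
  "ind3 x y z \<longleftrightarrow> (\<forall>r s t. scl r x + scl s y + scl t z = 0 \<longrightarrow> r = 0 \<and> s = 0 \<and> t = 0)"

lemma span1: "V.span {x} = {scl r x |r. True}"
  by (auto simp: V.span_singleton)

lemma span2: "V.span {x, y} = {scl r x + scl s y |r s. True}"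
proof -
  have "V.span {x, y} = {v. \<exists>k. v - scl k x \<in> V.span {y}}"
    by (rule V.span_insert)
  also have "\<dots> = {scl r x + scl s y |r s. True}"
    by (auto simp: span1 algebra_simps)
  finally show ?thesis .
qed

lemma span3: "V.span {x, y, z} = {scl r x + scl s y + scl t z |r s t. True}"
proof -
  have "V.span {x, y, z} = {v. \<exists>k. v - scl k x \<in> V.span {y, z}}"
    by (rule V.span_insert)
  also have "\<dots> = {scl r x + scl s y + scl t z |r s t. True}"
    by (auto simp: span2 algebra_simps)
  finally show ?thesis .
qed

lemma ind2_indep:
  assumes "ind2 x y" shows "V.independent {x, y}" "x \<noteq> y"
proof -
  have y0: "y \<noteq> 0" using assms unfolding ind2_def
    by (metis V.scale_one V.scale_zero_left V.scale_zero_right add_0 zero_neq_one)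
  have "x \<notin> V.span {y}"
  proof
    assume "x \<in> V.span {y}"
    then obtain r where "x = scl r y" by (auto simp: span1)
    then have "scl 1 x + scl (- r) y = 0" by (simp add: fun_eq_iff)
    then have "(1::'a) = 0" using assms unfolding ind2_def by blast
    then show False by simp
  qed
  moreover have "V.independent {y}" using y0 by simp
  ultimately show "V.independent {x, y}"
    by (rule V.independent_insertI)
  show "x \<noteq> y"
  proof
    assume "x = y"
    then have "scl 1 x + scl (- 1) y = 0" by (simp add: fun_eq_iff)
    then have "(1::'a) = 0" using assms unfolding ind2_def by blast
    then show False by simp
  qed
qed

lemma ind3_indep:
  assumes "ind3 x y z" shows "V.independent {x, y, z}" "x \<noteq> y" "x \<noteq> z" "y \<noteq> z"
proof -
  have i2: "ind2 y z" using assms unfolding ind3_def ind2_def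
    by (metis V.scale_zero_left add_0)
  have "x \<notin> V.span {y, z}"
  proof
    assume "x \<in> V.span {y, z}"
    then obtain r s where "x = scl r y + scl s z" by (auto simp: span2)
    then have "scl 1 x + scl (- r) y + scl (- s) z = 0" by (simp add: fun_eq_iff)
    then have "(1::'a) = 0" using assms unfolding ind3_def by blast
    then show False by simp
  qed
  then show "V.independent {x, y, z}"
    by (rule V.independent_insertI[OF _ ind2_indep(1)[OF i2]])
  show "y \<noteq> z" using ind2_indep[OF i2] by simp
  show "x \<noteq> y"
  proof
    assume "x = y"
    then have "scl 1 x + scl (- 1) y + scl 0 z = 0" by (simp add: fun_eq_iff)
    then have "(1::'a) = 0" using assms unfolding ind3_def by blast
    then show False by simp
  qed
  show "x \<noteq> z"
  proof
    assume "x = z"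
    then have "scl 1 x + scl 0 y + scl (-1) z = 0" by (simp add: fun_eq_iff)
    then have "(1::'a) = 0" using assms unfolding ind3_def by blast
    then show False by simp
  qed
qed

lemma indep_ind3:
  assumes "V.independent {x, y, z}" "x \<noteq> y" "x \<noteq> z" "y \<noteq> z"
  shows "ind3 x y z"
  unfolding ind3_def
proof (intro allI impI)
  fix r s t :: 'a
  assume eq: "scl r x + scl s y + scl t z = 0"
  define u where "u = (\<lambda>v. if v = x then r else if v = y then s else t)"
  have sum: "(\<Sum>v\<in>{x,y,z}. scl (u v) v) = 0"
    using assms eq by (simp add: u_def add.assoc)
  have "u x = 0" "u y = 0" "u z = 0"
    using V.independentD[OF assms(1) _ order.refl sum] by auto
  then show "r = 0 \<and> s = 0 \<and> t = 0" using assms by (auto simp: u_def)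
qed

lemma indep_ind2:
  assumes "V.independent {x, y}" "x \<noteq> y"
  shows "ind2 x y"
  unfolding ind2_def
proof (intro allI impI)
  fix r s :: 'a
  assume eq: "scl r x + scl s y = 0"
  define u where "u = (\<lambda>v. if v = x then r else s)"
  have sum: "(\<Sum>v\<in>{x,y}. scl (u v) v) = 0"
    using assms eq by (simp add: u_def)
  have "u x = 0" "u y = 0"
    using V.independentD[OF assms(1) _ order.refl sum] by auto
  then show "r = 0 \<and> s = 0" using assms by (auto simp: u_def)
qed

lemma subspace_ambient: "V.subspace (ambient n)"
  unfolding V.subspace_def ambient_def by (auto simp: scl_def)

lemma ambient_mono: "m \<le> n \<Longrightarrow> ambient m \<subseteq> ambient n"
  unfolding ambient_def by auto

lemma line_lin_sub:
  assumes "ind2 x y" "x \<in> ambient n" "y \<in> ambient n"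
  shows "lin_sub n 2 (V.span {x, y})"
  unfolding lin_sub_def
  using ind2_indep[OF assms(1)] assms(2,3) V.span_minimal[OF _ subspace_ambient, of "{x,y}" n]
  by (auto simp: V.dim_eq_card_independent)

lemma plane_basis:
  assumes "lin_sub n 3 P"
  obtains u1 u2 u3 where "ind3 u1 u2 u3" "P = V.span {u1, u2, u3}" "u1 \<in> P" "u2 \<in> P" "u3 \<in> P"
proof -
  have sP: "V.subspace P" using assms by (simp add: lin_sub_def)
  obtain B where B: "B \<subseteq> P" "V.independent B" "P \<subseteq> V.span B" "card B = V.dim P"
    using V.basis_exists by blast
  then have "card B = 3" using assms by (simp add: lin_sub_def)
  then obtain x y z where xyz: "B = {x, y, z}" "x \<noteq> y" "x \<noteq> z" "y \<noteq> z"
    by (auto simp: card_3_iff)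
  have "P = V.span B" using B V.span_minimal[OF B(1) sP] by auto
  then show ?thesis using that[of x y z] xyz B indep_ind3 by auto
qed

lemma line_basis:
  assumes "lin_sub n 2 P"
  obtains u1 u2 where "ind2 u1 u2" "P = V.span {u1, u2}" "u1 \<in> P" "u2 \<in> P"
proof -
  have sP: "V.subspace P" using assms by (simp add: lin_sub_def)
  obtain B where B: "B \<subseteq> P" "V.independent B" "P \<subseteq> V.span B" "card B = V.dim P"
    using V.basis_exists by blast
  then have "card B = 2" using assms by (simp add: lin_sub_def)
  then obtain x y where xyz: "B = {x, y}" "x \<noteq> y"
    by (auto simp: card_2_iff)
  have "P = V.span B" using B V.span_minimal[OF B(1) sP] by auto
  then show ?thesis using that[of x y] xyz B indep_ind2 by auto
qed

lemma plane_ext: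
  assumes "lin_sub n 3 P" "a \<in> P" "a \<noteq> 0"
  obtains v1 v2 where "ind3 a v1 v2" "v1 \<in> P" "v2 \<in> P"
proof -
  have sP: "V.subspace P" using assms by (simp add: lin_sub_def)
  have "V.independent {a}" using assms by simp
  then obtain B where B: "{a} \<subseteq> B" "B \<subseteq> P" "V.independent B" "P \<subseteq> V.span B"
    using V.maximal_independent_subset_extend[of "{a}" P] assms by auto
  have "card B = V.dim P" using V.basis_card_eq_dim[OF B(2,4,3)] .
  then have c3: "card B = 3" using assms by (simp add: lin_sub_def)
  then have "finite B" by (metis card.infinite zero_neq_numeral)
  then have "card (B - {a}) = 2" using c3 B(1) by (simp add: card_Diff_singleton)
  then obtain x y where xy: "B - {a} = {x, y}" "x \<noteq> y" by (auto simp: card_2_iff)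
  then have "B = {a, x, y}" "a \<noteq> x" "a \<noteq> y" using B(1) by auto
  then show ?thesis using that[of x y] xy B indep_ind3 by auto
qed



definition fs :: "nat set \<Rightarrow> (nat \<Rightarrow> 'a::zero) set" where
  "fs I = {v. \<forall>j. j \<notin> I \<longrightarrow> v j = 0}"

definition nrm :: "nat set \<Rightarrow> (nat \<Rightarrow> 'a::{zero,one}) set" where
  "nrm I = {v \<in> fs I. \<exists>i\<in>I. v i = 1 \<and> (\<forall>j>i. v j = 0)}"

definition lidx :: "(nat \<Rightarrow> 'a::zero) \<Rightarrow> nat" where
  "lidx v = (GREATEST i. v i \<noteq> 0)"

lemma fs_insert:
  assumes "x \<notin> F"
  shows "fs (insert x F) = (\<lambda>(c, v). v(x := c)) ` (UNIV \<times> fs F)"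
proof (intro set_eqI iffI)
  fix v :: "nat \<Rightarrow> 'a" assume "v \<in> fs (insert x F)"
  then have "v = (\<lambda>(c, v). v(x := c)) (v x, v(x := 0))" "(v x, v(x := 0)) \<in> UNIV \<times> fs F"
    by (auto simp: fs_def)
  then show "v \<in> (\<lambda>(c, v). v(x := c)) ` (UNIV \<times> fs F)" by blast
next
  fix v :: "nat \<Rightarrow> 'a" assume "v \<in> (\<lambda>(c, v). v(x := c)) ` (UNIV \<times> fs F)"
  then show "v \<in> fs (insert x F)" by (auto simp: fs_def)
qed

lemma card_fs:
  assumes "finite I"
  shows "card (fs I :: (nat \<Rightarrow> 'a::{zero,finite}) set) = CARD('a) ^ card I \<and> finite (fs I :: (nat \<Rightarrow> 'a) set)"
  using assms
proof (induction I rule: finite_induct)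
  case empty
  have "fs {} = {0 :: nat \<Rightarrow> 'a}" by (auto simp: fs_def fun_eq_iff)
  then show ?case by simp
next
  case (insert x F)
  have inj: "inj_on (\<lambda>(c, v). v(x := c)) (UNIV \<times> (fs F :: (nat \<Rightarrow> 'a) set))"
    using insert(2) by (auto simp: inj_on_def fs_def fun_eq_iff)
  show ?case
    unfolding fs_insert[OF insert(2)]
    using insert inj by (simp add: card_image card_cartesian_product)
qed

lemma fs_finite: "finite I \<Longrightarrow> finite (fs I :: (nat \<Rightarrow> 'a::{zero,finite}) set)"
  using card_fs by blast

lemma card_nrm:
  assumes "finite I"
  shows "card (nrm I :: (nat \<Rightarrow> 'a::{zero_neq_one,finite}) set) = (\<Sum>j<card I. CARD('a) ^ j)"
  using assms
proof (induction I rule: finite_linorder_max_induct)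
  case empty
  then show ?case by (simp add: nrm_def)
next
  case (insert b A)
  have bA: "b \<notin> A" using insert(2) by auto
  let ?T = "(\<lambda>v. v(b := 1)) ` (fs A :: (nat \<Rightarrow> 'a) set)"
  have eq: "nrm (insert b A) = nrm A \<union> ?T"
  proof (intro set_eqI iffI)
    fix v :: "nat \<Rightarrow> 'a" assume v: "v \<in> nrm (insert b A)"
    then obtain i where i: "i \<in> insert b A" "v i = 1" "\<forall>j>i. v j = 0" and vf: "v \<in> fs (insert b A)"
      by (auto simp: nrm_def)
    show "v \<in> nrm A \<union> ?T"
    proof (cases "i = b")
      case True
      then have "v = (v(b := 0))(b := 1)" "v(b := 0) \<in> fs A" using i vf by (auto simp: fs_def)
      then show ?thesis by blast
    next
      case False
      then have "i \<in> A" "i < b" using i insert(2) by auto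
      then have "v b = 0" using i by auto
      then have "v \<in> fs A" using vf by (auto simp: fs_def)
      then show ?thesis using i \<open>i \<in> A\<close> by (auto simp: nrm_def)
    qed
  next
    fix v :: "nat \<Rightarrow> 'a" assume "v \<in> nrm A \<union> ?T"
    then show "v \<in> nrm (insert b A)"
    proof
      assume "v \<in> nrm A" then show ?thesis by (auto simp: nrm_def fs_def)
    next
      assume "v \<in> ?T"
      then obtain u where u: "u \<in> fs A" "v = u(b := 1)" by auto
      have "\<forall>j>b. v j = 0"
      proof (intro allI impI)
        fix j assume "b < j"
        then have "j \<notin> A" "j \<noteq> b" using insert(2) by auto
        then show "v j = 0" using u by (simp add: fs_def)
      qed
      then show ?thesis using u by (auto simp: nrm_def fs_def)
    qed
  qed
  have disj: "nrm A \<inter> ?T = {}"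
  proof -
    have "v b = 0" if "v \<in> nrm A" for v :: "nat \<Rightarrow> 'a" using that bA by (auto simp: nrm_def fs_def)
    then show ?thesis by force
  qed
  have inj: "inj_on (\<lambda>v. v(b := 1)) (fs A :: (nat \<Rightarrow> 'a) set)"
    using bA by (auto simp: inj_on_def fs_def fun_eq_iff) metis
  have finT: "finite ?T" using fs_finite[OF insert(1)] by blast
  have finN: "finite (nrm A :: (nat \<Rightarrow> 'a) set)"
    using fs_finite[OF insert(1)] by (rule finite_subset[rotated]) (auto simp: nrm_def)
  have "card (nrm (insert b A) :: (nat \<Rightarrow> 'a) set) = card (nrm A :: (nat \<Rightarrow> 'a) set) + card ?T"
    unfolding eq using disj finT finN by (simp add: card_Un_disjoint)
  also have "card ?T = CARD('a) ^ card A"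
    using card_image[OF inj] card_fs[OF insert(1), where 'a='a] by simp
  finally show ?case using insert bA by simp
qed

lemma nrm_finite: "finite I \<Longrightarrow> finite (nrm I :: (nat \<Rightarrow> 'a::{zero_neq_one,finite}) set)"
  using fs_finite by (rule finite_subset[rotated]) (auto simp: nrm_def)

lemma lidx_eq:
  assumes "v i \<noteq> 0" "\<forall>j>i. v j = 0"
  shows "lidx v = i"
  unfolding lidx_def
  by (rule Greatest_equality) (use assms in \<open>auto simp: not_less[symmetric]\<close>)

lemma lidx_nrm:
  fixes v :: "nat \<Rightarrow> 'a::zero_neq_one"
  assumes "v \<in> nrm I"
  shows "lidx v \<in> I" "v (lidx v) = 1" "\<forall>j>lidx v. v j = 0"
proof -
  obtain i where i: "i \<in> I" "v i = 1" "\<forall>j>i. v j = 0" using assms by (auto simp: nrm_def)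
  then have "lidx (v :: nat \<Rightarrow> 'a) = i" by (intro lidx_eq) auto
  then show "lidx v \<in> I" "v (lidx v) = 1" "\<forall>j>lidx v. v j = 0" using i by auto
qed

lemma lidx_prop:
  assumes "v \<noteq> 0" "\<forall>j>M. v j = 0"
  shows "v (lidx v) \<noteq> 0" "\<forall>j>lidx v. v j = 0" "lidx v \<le> M"
proof -
  obtain k where k: "v k \<noteq> 0" using assms by (auto simp: fun_eq_iff)
  have b: "\<And>y. v y \<noteq> 0 \<Longrightarrow> y \<le> M" using assms not_less by blast
  show "v (lidx v) \<noteq> 0" unfolding lidx_def by (rule GreatestI_nat[of "\<lambda>i. v i \<noteq> 0", OF k b])
  then show "lidx v \<le> M" using b by blast
  show "\<forall>j>lidx v. v j = 0"
    using Greatest_le_nat[of "\<lambda>i. v i \<noteq> 0", OF _ b] unfolding lidx_def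
    by (meson leD)
qed



definition tlv :: "nat \<Rightarrow> (nat \<Rightarrow> 'a::field) \<Rightarrow> (nat \<Rightarrow> 'a)" where
  "tlv K v = (\<lambda>i. v (i + Suc K))"

definition shv :: "nat \<Rightarrow> (nat \<Rightarrow> 'a::field) \<Rightarrow> (nat \<Rightarrow> 'a)" where
  "shv K w = (\<lambda>i. if i \<le> K then 0 else w (i - Suc K))"

definition rho :: "nat \<Rightarrow> (nat \<Rightarrow> 'a::field) \<Rightarrow> (nat \<Rightarrow> 'a)" where
  "rho K v = (\<lambda>i. if i \<le> K then v i else 0)"

definition bet :: "nat \<Rightarrow> (nat \<Rightarrow> 'a::field) \<Rightarrow> (nat \<Rightarrow> 'a) \<Rightarrow> 'a" where
  "bet K x w = (\<Sum>j\<le>K. x j * w (Suc K + j))"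

definition ee :: "nat \<Rightarrow> (nat \<Rightarrow> 'a::field)" where
  "ee j = (\<lambda>i. if i = j then 1 else 0)"

lemma ambient_nat: "ambient (int K) = {v. \<forall>i>K. v i = 0}"
  by (auto simp: ambient_def)

lemma ambient_fs: "ambient (int K) = fs {0..K}"
  by (auto simp: ambient_nat fs_def)

lemma tlv_lin: "tlv K (scl r x + scl s y) = scl r (tlv K x) + scl s (tlv K y)"
  by (simp add: tlv_def fun_eq_iff)

lemma tlv_lin3: "tlv K (scl r x + scl s y + scl t z) = scl r (tlv K x) + scl s (tlv K y) + scl t (tlv K z)"
  by (simp add: tlv_def fun_eq_iff)

lemma tlv_zero_iff: "tlv K v = 0 \<longleftrightarrow> v \<in> ambient (int K)"
proof
  assume "tlv K v = 0"
  then have "v i = 0" if "i > K" for i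
  proof -
    have "tlv K v (i - Suc K) = 0" using \<open>tlv K v = 0\<close> by simp
    then show ?thesis using that by (simp add: tlv_def)
  qed
  then show "v \<in> ambient (int K)" by (simp add: ambient_nat)
qed (auto simp: tlv_def ambient_nat fun_eq_iff)

lemma decomp: "v = rho K v + shv K (tlv K v)"
  by (auto simp: rho_def shv_def tlv_def fun_eq_iff)

lemma tlv_decomp: "a \<in> ambient (int K) \<Longrightarrow> tlv K (a + shv K w) = w"
  by (auto simp: ambient_nat shv_def tlv_def fun_eq_iff)

lemma tlv_ambient: "K < N \<Longrightarrow> v \<in> ambient (int N) \<Longrightarrow> tlv K v \<in> ambient (int (N - K - 1))"
  unfolding ambient_nat by (auto simp: tlv_def)

lemma shv_ambient: "K < N \<Longrightarrow> w \<in> ambient (int (N - K - 1)) \<Longrightarrow> a \<in> ambient (int K) \<Longrightarrow> a + shv K w \<in> ambient (int N)"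
  unfolding ambient_nat by (auto simp: shv_def)

lemma rho_ambient: "rho K v \<in> ambient (int K)"
  by (auto simp: ambient_nat rho_def)

lemma bet_cong: "(\<And>j. j > K \<Longrightarrow> y j = y' j) \<Longrightarrow> bet K x y = bet K x y'"
  unfolding bet_def by (intro sum.cong) auto

lemma bet_lin2: "bet K x (scl r u + scl s v) = r * bet K x u + s * bet K x v"
  unfolding bet_def by (simp add: sum_distrib_left sum.distrib algebra_simps)

lemma bet_lin1: "bet K (scl r x + scl s y) w = r * bet K x w + s * bet K y w"
  unfolding bet_def by (simp add: sum_distrib_left sum.distrib algebra_simps)

lemma bet_scl1: "bet K (scl r x) w = r * bet K x w"
  unfolding bet_def by (simp add: sum_distrib_left algebra_simps)

lemma bet_scl2: "bet K x (scl r w) = r * bet K x w"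
  unfolding bet_def by (simp add: sum_distrib_left algebra_simps)

lemma bet_split:
  assumes "x i = 1" "\<forall>j>i. x j = 0" "i \<le> K"
  shows "bet K x y = bet K x (\<lambda>j. if j = Suc K + i then 0 else y j) + y (Suc K + i)"
proof -
  have "x j * y (Suc K + j) = x j * (if Suc K + j = Suc K + i then 0 else y (Suc K + j))
        + (if j = i then y (Suc K + i) else 0)" for j
    using assms by (cases "j = i") auto
  then have "bet K x y = bet K x (\<lambda>j. if j = Suc K + i then 0 else y j)
       + (\<Sum>j\<le>K. if j = i then y (Suc K + i) else 0)"
    unfolding bet_def by (simp add: sum.distrib)
  then show ?thesis using assms by simp
qed

lemma ind2_sep:
  assumes "x \<in> ambient (int K)" "x \<noteq> 0" "y m \<noteq> 0" "m > K"
  shows "ind2 x y"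
  unfolding ind2_def
proof (intro allI impI)
  fix r s :: 'a assume eq: "scl r x + scl s y = 0"
  have "x m = 0" using assms by (simp add: ambient_nat)
  then have "s * y m = 0" using fun_cong[OF eq, of m] by simp
  then have s: "s = 0" using assms by simp
  then have "scl r x = 0" using eq by (simp add: fun_eq_iff)
  then have "r = 0" using assms by (auto simp: fun_eq_iff)
  then show "r = 0 \<and> s = 0" using s by simp
qed

lemma ind2_tlv: "ind2 (tlv K x) (tlv K y) \<Longrightarrow> ind2 x y"
  unfolding ind2_def
proof (intro allI impI)
  fix r s :: 'a
  assume h: "\<forall>r s. scl r (tlv K x) + scl s (tlv K y) = 0 \<longrightarrow> r = 0 \<and> s = 0"
    and eq: "scl r x + scl s y = 0"
  have "tlv K (scl r x + scl s y) = 0" using eq by (simp add: tlv_def fun_eq_iff)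
  then have "scl r (tlv K x) + scl s (tlv K y) = 0" by (simp add: tlv_lin)
  then show "r = 0 \<and> s = 0" using h by blast
qed



definition D2 :: "nat \<Rightarrow> nat \<Rightarrow> ((nat \<Rightarrow> 'a::field) \<times> (nat \<Rightarrow> 'a) \<times> (nat \<Rightarrow> 'a)) set" where
  "D2 K N = Sigma (nrm {0..K}) (\<lambda>a. fs ({0..K} - {lidx a}) \<times> nrm ({Suc K..N} - {Suc K + lidx a}))"

definition vec2 :: "nat \<Rightarrow> (nat \<Rightarrow> 'a::field) \<Rightarrow> (nat \<Rightarrow> 'a) \<Rightarrow> (nat \<Rightarrow> 'a) \<Rightarrow> (nat \<Rightarrow> 'a)" where
  "vec2 K a g h = g + h - scl (bet K a h) (ee (Suc K + lidx a))"

definition mk2 :: "nat \<Rightarrow> (nat \<Rightarrow> 'a::field) \<times> (nat \<Rightarrow> 'a) \<times> (nat \<Rightarrow> 'a) \<Rightarrow> (nat \<Rightarrow> 'a) set" where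
  "mk2 K = (\<lambda>(a, g, h). V.span {a, vec2 K a g h})"

lemma card_D2:
  assumes "2 * K + 1 \<le> N"
  shows "card (D2 K N :: ((nat \<Rightarrow> 'a::{field,finite}) \<times> _ \<times> _) set)
     = (\<Sum>j<K+1. CARD('a) ^ j) * (CARD('a) ^ K * (\<Sum>j<N-K-1. CARD('a) ^ j))
   \<and> finite (D2 K N :: ((nat \<Rightarrow> 'a::{field,finite}) \<times> _ \<times> _) set)"
proof -
  have each: "card (fs ({0..K} - {lidx a}) \<times> nrm ({Suc K..N} - {Suc K + lidx a}) :: ((nat \<Rightarrow> 'a) \<times> (nat \<Rightarrow> 'a)) set)
      = CARD('a) ^ K * (\<Sum>j<N-K-1. CARD('a) ^ j)
    \<and> finite (fs ({0..K} - {lidx a}) \<times> nrm ({Suc K..N} - {Suc K + lidx a}) :: ((nat \<Rightarrow> 'a) \<times> (nat \<Rightarrow> 'a)) set)"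
    if a: "a \<in> (nrm {0..K} :: (nat \<Rightarrow> 'a) set)" for a
  proof -
    have i: "lidx a \<le> K" using lidx_nrm(1)[OF a] by simp
    have c1: "card ({0..K} - {lidx a}) = K" using i by (simp add: card_Diff_singleton)
    have c2: "card ({Suc K..N} - {Suc K + lidx a}) = N - K - 1" using i assms
      by (simp add: card_Diff_singleton)
    show ?thesis
      using card_fs[of "{0..K} - {lidx a}", where 'a='a] card_nrm[of "{Suc K..N} - {Suc K + lidx a}", where 'a='a]
        nrm_finite[of "{Suc K..N} - {Suc K + lidx a}", where 'a='a] c1 c2
      by (simp add: card_cartesian_product)
  qed
  have fin: "finite (nrm {0..K} :: (nat \<Rightarrow> 'a) set)" by (simp add: nrm_finite)
  have "card (D2 K N :: ((nat \<Rightarrow> 'a) \<times> _ \<times> _) set)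
      = (\<Sum>a\<in>(nrm {0..K} :: (nat \<Rightarrow> 'a) set). CARD('a) ^ K * (\<Sum>j<N-K-1. CARD('a) ^ j))"
    unfolding D2_def using fin each by (simp add: card_SigmaI)
  also have "\<dots> = (\<Sum>j<K+1. CARD('a) ^ j) * (CARD('a) ^ K * (\<Sum>j<N-K-1. CARD('a) ^ j))"
    using card_nrm[of "{0..K}", where 'a='a] by simp
  finally show ?thesis
    unfolding D2_def using fin each by (auto intro!: finite_SigmaI)
qed

lemma set2_line:
  assumes "2 * K + 1 \<le> N" "p \<in> (D2 K N :: ((nat \<Rightarrow> 'a::field) \<times> _ \<times> _) set)"
  shows "lin_sub (int N) 2 (mk2 K p)"
proof -
  obtain a g h where p: "p = (a, g, h)" and a: "a \<in> nrm {0..K}"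
    and g: "g \<in> fs ({0..K} - {lidx a})" and h: "h \<in> nrm ({Suc K..N} - {Suc K + lidx a})"
    using assms(2) unfolding D2_def by auto
  let ?i = "lidx a"
  have i: "?i \<le> K" "a ?i = 1" using lidx_nrm[OF a] by auto
  let ?m = "lidx h"
  have m: "?m \<in> {Suc K..N} - {Suc K + ?i}" "h ?m = 1" using lidx_nrm[OF h] by auto
  have aA: "a \<in> ambient (int K)" using a by (simp add: ambient_fs nrm_def)
  have a0: "a \<noteq> 0" using i by (metis one_neq_zero zero_fun_def)
  have "vec2 K a g h ?m = 1"
    using m g by (auto simp: vec2_def fs_def ee_def)
  then have ind: "ind2 a (vec2 K a g h)"
    by (intro ind2_sep[OF aA a0, of _ ?m]) (use m in auto)
  have aN: "a \<in> ambient (int N)" using aA assms(1) ambient_mono[of "int K" "int N"] by auto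
  have vN: "vec2 K a g h \<in> ambient (int N)"
    using g h i assms(1) by (auto simp: ambient_nat vec2_def fs_def nrm_def ee_def)
  show ?thesis unfolding p mk2_def using line_lin_sub[OF ind aN vN] by simp
qed

lemma cover2:
  assumes N: "2 * K + 1 \<le> N" and P: "lin_sub (int N) 3 P"
    and a: "a \<in> P" "a \<in> ambient (int K)" "a \<noteq> 0"
    and w: "w \<in> P" "w j \<noteq> 0" "j > K" and bw: "bet K a w = 0"
  shows "\<exists>L\<in>mk2 K ` D2 K N. L \<subseteq> P"
proof -
  have sP: "V.subspace P" and PN: "P \<subseteq> ambient (int N)" using P by (auto simp: lin_sub_def)
  have aK: "\<forall>j>K. a j = 0" using a by (simp add: ambient_nat)
  define i where "i = lidx a"
  have i: "a i \<noteq> 0" "\<forall>j>i. a j = 0" "i \<le> K" using lidx_prop[OF a(3) aK] unfolding i_def by auto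
  define an where "an = scl (1 / a i) a"
  have an: "an i = 1" "\<forall>j>i. an j = 0" using i by (auto simp: an_def)
  have anP: "an \<in> P" unfolding an_def by (rule V.subspace_scale[OF sP a(1)])
  have an_nrm: "an \<in> nrm {0..K}" using an i aK by (auto simp: nrm_def fs_def an_def)
  have lan: "lidx an = i" using an by (intro lidx_eq) auto
  define w1 where "w1 = w - scl (w i) an"
  have w1P: "w1 \<in> P" unfolding w1_def by (intro V.subspace_diff[OF sP w(1)] V.subspace_scale[OF sP anP])
  have w1i: "w1 i = 0" using an by (simp add: w1_def)
  have w1C: "\<And>j. j > K \<Longrightarrow> w1 j = w j" using aK by (simp add: w1_def an_def)
  have bw1: "bet K an w1 = 0"
  proof -
    have "bet K an w1 = bet K an w" by (rule bet_cong) (simp add: w1C)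
    also have "\<dots> = 0" using bw by (simp add: an_def bet_scl1)
    finally show ?thesis .
  qed
  have w1N: "\<forall>j>N. w1 j = 0" using PN w1P by (auto simp: ambient_nat)
  define h0 where "h0 = (\<lambda>j. if K < j \<and> j \<noteq> Suc K + i then w1 j else 0)"
  have split1: "bet K an w1 = bet K an h0 + w1 (Suc K + i)"
  proof -
    have "bet K an w1 = bet K an (\<lambda>j. if j = Suc K + i then 0 else w1 j) + w1 (Suc K + i)"
      by (rule bet_split[OF an i(3)])
    also have "bet K an (\<lambda>j. if j = Suc K + i then 0 else w1 j) = bet K an h0"
      by (rule bet_cong) (auto simp: h0_def)
    finally show ?thesis .
  qed
  have h00: "h0 \<noteq> 0"
  proof
    assume "h0 = 0"
    then have "bet K an h0 = 0" by (simp add: bet_def)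
    then have "w1 (Suc K + i) = 0" using split1 bw1 by simp
    moreover have "w1 j' = 0" if "j' > K" "j' \<noteq> Suc K + i" for j'
      using fun_cong[OF \<open>h0 = 0\<close>, of j'] that by (simp add: h0_def)
    ultimately have "w1 j = 0" using w(3) by (cases "j = Suc K + i") auto
    then show False using w w1C by simp
  qed
  have h0N: "\<forall>j>N. h0 j = 0" using w1N by (simp add: h0_def)
  define m where "m = lidx h0"
  have m: "h0 m \<noteq> 0" "\<forall>j>m. h0 j = 0" "m \<le> N" using lidx_prop[OF h00 h0N] unfolding m_def by auto
  define t where "t = h0 m"
  have t0: "t \<noteq> 0" using m by (simp add: t_def)
  have mK: "K < m" "m \<noteq> Suc K + i" using m(1) by (auto simp: h0_def split: if_splits)
  define w2 where "w2 = scl (1 / t) w1"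
  have w2P: "w2 \<in> P" unfolding w2_def by (rule V.subspace_scale[OF sP w1P])
  define g where "g = (\<lambda>j. if j \<le> K then w2 j else 0)"
  define h where "h = (\<lambda>j. if K < j \<and> j \<noteq> Suc K + i then w2 j else 0)"
  have hh0: "h = scl (1 / t) h0" by (auto simp: h_def h0_def w2_def fun_eq_iff)
  have g_fs: "g \<in> fs ({0..K} - {i})" using w1i by (auto simp: fs_def g_def w2_def)
  have h_nrm: "h \<in> nrm ({Suc K..N} - {Suc K + i})"
  proof -
    have "h \<in> fs ({Suc K..N} - {Suc K + i})"
      using w1N by (auto simp: fs_def h_def w2_def)
    moreover have "h m = 1" using t0 by (simp add: hh0 t_def)
    moreover have "\<forall>j>m. h j = 0" using m(2) by (simp add: hh0)
    ultimately show ?thesis using mK m(3) by (auto simp: nrm_def)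
  qed
  have bw2: "bet K an w2 = 0" using bw1 by (simp add: w2_def bet_scl2)
  have split2: "bet K an w2 = bet K an h + w2 (Suc K + i)"
  proof -
    have "bet K an w2 = bet K an (\<lambda>j. if j = Suc K + i then 0 else w2 j) + w2 (Suc K + i)"
      by (rule bet_split[OF an i(3)])
    also have "bet K an (\<lambda>j. if j = Suc K + i then 0 else w2 j) = bet K an h"
      by (rule bet_cong) (auto simp: h_def)
    finally show ?thesis .
  qed
  have vec: "vec2 K an g h = w2"
  proof
    fix j
    show "vec2 K an g h j = w2 j"
    proof (cases "j = Suc K + i")
      case True
      then show ?thesis using split2 bw2 lan
        by (simp add: vec2_def g_def h_def ee_def) (metis add.inverse_unique add.commute)
    next
      case False
      then show ?thesis using lan by (simp add: vec2_def g_def h_def ee_def)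
    qed
  qed
  have mem: "(an, g, h) \<in> D2 K N" unfolding D2_def using an_nrm g_fs h_nrm lan by auto
  have "mk2 K (an, g, h) \<subseteq> P"
    unfolding mk2_def using vec anP w2P by (auto intro!: V.span_minimal[OF _ sP])
  then show ?thesis using mem by blast
qed



definition bs :: "(nat \<Rightarrow> 'a::field) set \<Rightarrow> (nat \<Rightarrow> 'a) \<times> (nat \<Rightarrow> 'a)" where
  "bs l = (SOME p. ind2 (fst p) (snd p) \<and> l = V.span {fst p, snd p} \<and> fst p \<in> l \<and> snd p \<in> l)"

lemma bs_prop:
  assumes "lin_sub m 2 l"
  shows "ind2 (fst (bs l)) (snd (bs l)) \<and> l = V.span {fst (bs l), snd (bs l)} \<and> fst (bs l) \<in> l \<and> snd (bs l) \<in> l"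
proof -
  obtain u1 u2 where "ind2 u1 u2" "l = V.span {u1, u2}" "u1 \<in> l" "u2 \<in> l"
    using line_basis[OF assms] by blast
  then have "\<exists>p. ind2 (fst p) (snd p) \<and> l = V.span {fst p, snd p} \<and> fst p \<in> l \<and> snd p \<in> l"
    by (intro exI[of _ "(u1, u2)"]) simp
  then show ?thesis unfolding bs_def by (rule someI_ex)
qed

definition mk3 :: "nat \<Rightarrow> (nat \<Rightarrow> 'a::field) set \<times> (nat \<Rightarrow> 'a) \<times> (nat \<Rightarrow> 'a) \<Rightarrow> (nat \<Rightarrow> 'a) set" where
  "mk3 K = (\<lambda>(l, a1, a2). V.span {a1 + shv K (fst (bs l)), a2 + shv K (snd (bs l))})"

lemma set3_line:
  assumes "K < N" "lin_sub (int (N - K - 1)) 2 l" "a1 \<in> fs {0..K}" "a2 \<in> fs {0..K}"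
  shows "lin_sub (int N) 2 (mk3 K (l, a1, a2))"
proof -
  note b = bs_prop[OF assms(2)]
  have lA: "l \<subseteq> ambient (int (N - K - 1))" using assms(2) by (simp add: lin_sub_def)
  have aA: "a1 \<in> ambient (int K)" "a2 \<in> ambient (int K)" using assms(3,4) by (simp_all add: ambient_fs)
  have x1: "a1 + shv K (fst (bs l)) \<in> ambient (int N)"
    using shv_ambient[OF assms(1) _ aA(1)] b lA by blast
  have x2: "a2 + shv K (snd (bs l)) \<in> ambient (int N)"
    using shv_ambient[OF assms(1) _ aA(2)] b lA by blast
  have "ind2 (tlv K (a1 + shv K (fst (bs l)))) (tlv K (a2 + shv K (snd (bs l))))"
    unfolding tlv_decomp[OF aA(1)] tlv_decomp[OF aA(2)] using b by blast
  then have "ind2 (a1 + shv K (fst (bs l))) (a2 + shv K (snd (bs l)))"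
    by (rule ind2_tlv)
  then show ?thesis unfolding mk3_def using line_lin_sub[OF _ x1 x2] by simp
qed

lemma cover3:
  assumes KN: "K < N" and BC: "blocking21 TYPE('a::field) (int (N - K - 1)) BC"
    and P: "lin_sub (int N) 3 (P :: (nat \<Rightarrow> 'a) set)"
    and PA: "\<forall>v\<in>P. v \<in> ambient (int K) \<longrightarrow> v = 0"
  shows "\<exists>L\<in>mk3 K ` (BC \<times> fs {0..K} \<times> fs {0..K}). L \<subseteq> P"
proof -
  obtain u1 u2 u3 where u: "ind3 u1 u2 u3" "P = V.span {u1, u2, u3}" "u1 \<in> P" "u2 \<in> P" "u3 \<in> P"
    using plane_basis[OF P] by blast
  have sP: "V.subspace P" and PN: "P \<subseteq> ambient (int N)" using P by (auto simp: lin_sub_def)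
  let ?Q = "tlv K ` P"
  have Qeq: "?Q = V.span {tlv K u1, tlv K u2, tlv K u3}"
  proof (intro set_eqI iffI)
    fix x assume "x \<in> tlv K ` P"
    then show "x \<in> V.span {tlv K u1, tlv K u2, tlv K u3}"
      unfolding u(2) span3 by (auto simp: tlv_lin3) blast
  next
    fix x assume "x \<in> V.span {tlv K u1, tlv K u2, tlv K u3}"
    then obtain r s t where "x = scl r (tlv K u1) + scl s (tlv K u2) + scl t (tlv K u3)"
      unfolding span3 by blast
    then have "x = tlv K (scl r u1 + scl s u2 + scl t u3)" by (simp add: tlv_lin3)
    moreover have "scl r u1 + scl s u2 + scl t u3 \<in> P" unfolding u(2) span3 by blast
    ultimately show "x \<in> tlv K ` P" by blast
  qed
  have ind: "ind3 (tlv K u1) (tlv K u2) (tlv K u3)"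
    unfolding ind3_def
  proof (intro allI impI)
    fix r s t :: 'a
    assume "scl r (tlv K u1) + scl s (tlv K u2) + scl t (tlv K u3) = 0"
    then have "tlv K (scl r u1 + scl s u2 + scl t u3) = 0" by (simp add: tlv_lin3)
    then have "scl r u1 + scl s u2 + scl t u3 \<in> ambient (int K)" by (simp add: tlv_zero_iff)
    moreover have "scl r u1 + scl s u2 + scl t u3 \<in> P" unfolding u(2) span3 by blast
    ultimately have "scl r u1 + scl s u2 + scl t u3 = 0" using PA by blast
    then show "r = 0 \<and> s = 0 \<and> t = 0" using u(1) unfolding ind3_def by blast
  qed
  have QA: "?Q \<subseteq> ambient (int (N - K - 1))" using PN tlv_ambient[OF KN] by blast
  have "lin_sub (int (N - K - 1)) 3 ?Q"
    unfolding lin_sub_def using QA ind3_indep[OF ind]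
    by (simp add: Qeq V.dim_eq_card_independent)
  then obtain l where l: "l \<in> BC" "l \<subseteq> ?Q" using BC unfolding blocking21_def by blast
  have ll: "lin_sub (int (N - K - 1)) 2 l" using BC l unfolding blocking21_def by blast
  note b = bs_prop[OF ll]
  have f1: "fst (bs l) \<in> tlv K ` P" using conjunct1[OF conjunct2[OF conjunct2[OF b]]] l(2) by (rule subsetD[rotated])
  have f2: "snd (bs l) \<in> tlv K ` P" using conjunct2[OF conjunct2[OF conjunct2[OF b]]] l(2) by (rule subsetD[rotated])
  obtain x1 where x1: "x1 \<in> P" "tlv K x1 = fst (bs l)" using f1 by (metis imageE)
  obtain x2 where x2: "x2 \<in> P" "tlv K x2 = snd (bs l)" using f2 by (metis imageE)
  have eq: "mk3 K (l, rho K x1, rho K x2) = V.span {x1, x2}"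
    unfolding mk3_def using decomp[of x1 K] decomp[of x2 K] x1 x2 by simp
  have mem: "(l, rho K x1, rho K x2) \<in> BC \<times> fs {0..K} \<times> fs {0..K}"
    using l rho_ambient[of K x1] rho_ambient[of K x2] by (simp add: ambient_fs)
  have "V.span {x1, x2} \<subseteq> P" using x1 x2 by (intro V.span_minimal[OF _ sP]) auto
  then show ?thesis using eq mem by (metis image_eqI)
qed

lemma finite_ambient: "finite (ambient m :: (nat \<Rightarrow> 'a::{finite,field}) set)"
proof -
  have "ambient m \<subseteq> (fs {..nat m} :: (nat \<Rightarrow> 'a) set)"
    by (auto simp: ambient_def fs_def)
  then show ?thesis using fs_finite[of "{..nat m}"] finite_subset by blast
qed

lemma fPG_ex:
  "\<exists>B. finite B \<and> blocking21 TYPE('a::{field,finite}) m B \<and> card B = fPG TYPE('a) m"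
proof -
  let ?B = "{L :: (nat \<Rightarrow> 'a) set. lin_sub m 2 L}"
  have fin: "finite ?B"
    by (rule finite_subset[of _ "Pow (ambient m)"]) (auto simp: lin_sub_def finite_ambient)
  have blk: "blocking21 TYPE('a) m ?B"
    unfolding blocking21_def
  proof (intro conjI ballI allI impI)
    fix P :: "(nat \<Rightarrow> 'a) set" assume P: "lin_sub m 3 P"
    obtain u1 u2 u3 where u: "ind3 u1 u2 u3" "P = V.span {u1, u2, u3}" "u1 \<in> P" "u2 \<in> P" "u3 \<in> P"
      using plane_basis[OF P] by blast
    have sP: "V.subspace P" and PA: "P \<subseteq> ambient m" using P by (auto simp: lin_sub_def)
    have "ind2 u1 u2" using u(1) unfolding ind3_def ind2_def
      by (metis V.scale_zero_left add.right_neutral)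
    then have "lin_sub m 2 (V.span {u1, u2})" using line_lin_sub u PA by blast
    moreover have "V.span {u1, u2} \<subseteq> P" using u by (intro V.span_minimal[OF _ sP]) auto
    ultimately show "\<exists>L\<in>?B. L \<subseteq> P" by blast
  qed auto
  have "\<exists>m'. \<exists>B. finite B \<and> blocking21 TYPE('a) m B \<and> card B = m'" using fin blk by blast
  then show ?thesis unfolding fPG_def by (rule LeastI_ex)
qed

lemma fPG_le:
  "finite B \<Longrightarrow> blocking21 TYPE('a::{field,finite}) m B \<Longrightarrow> fPG TYPE('a) m \<le> card B"
  unfolding fPG_def by (rule Least_le) blast



lemma cover2b:
  assumes N: "2 * K + 1 \<le> N" and P: "lin_sub (int N) 3 P"
    and a: "a \<in> P" "a \<in> ambient (int K)" "a \<noteq> 0"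
    and v: "v \<in> P" "v j \<noteq> 0" "j > K"
  shows "\<exists>L\<in>mk2 K ` D2 K N. L \<subseteq> P"
proof -
  have sP: "V.subspace P" using P by (auto simp: lin_sub_def)
  obtain v1 v2 where vv: "ind3 a v1 v2" "v1 \<in> P" "v2 \<in> P"
    using plane_ext[OF P a(1) a(3)] by blast
  define c1 where "c1 = (if bet K a v1 = 0 \<and> bet K a v2 = 0 then 1 else bet K a v2)"
  define c2 where "c2 = (if bet K a v1 = 0 \<and> bet K a v2 = 0 then 0 else - bet K a v1)"
  have c12: "c1 \<noteq> 0 \<or> c2 \<noteq> 0" by (auto simp: c1_def c2_def)
  define w where "w = scl c1 v1 + scl c2 v2"
  have wP: "w \<in> P" unfolding w_def
    by (intro V.subspace_add[OF sP] V.subspace_scale[OF sP] vv)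
  have bw: "bet K a w = 0" unfolding w_def bet_lin2 by (auto simp: c1_def c2_def algebra_simps)
  show ?thesis
  proof (cases "\<exists>j'>K. w j' \<noteq> 0")
    case True
    then obtain j' where j': "j' > K" "w j' \<noteq> 0" by blast
    show ?thesis using cover2[OF N P a wP j'(2) j'(1) bw] .
  next
    case False
    then have wA: "w \<in> ambient (int K)" by (simp add: ambient_nat)
    define d1 where "d1 = (if bet K a v = 0 \<and> bet K w v = 0 then 1 else bet K w v)"
    define d2 where "d2 = (if bet K a v = 0 \<and> bet K w v = 0 then 0 else - bet K a v)"
    have d12: "d1 \<noteq> 0 \<or> d2 \<noteq> 0" by (auto simp: d1_def d2_def)
    define a' where "a' = scl d1 a + scl d2 w"
    have a'P: "a' \<in> P" unfolding a'_def
      by (intro V.subspace_add[OF sP] V.subspace_scale[OF sP] a(1) wP)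
    have a'A: "a' \<in> ambient (int K)" unfolding a'_def
      by (intro V.subspace_add[OF subspace_ambient] V.subspace_scale[OF subspace_ambient] a(2) wA)
    have ba: "bet K a' v = 0" unfolding a'_def bet_lin1 by (auto simp: d1_def d2_def algebra_simps)
    have a'0: "a' \<noteq> 0"
    proof
      assume "a' = 0"
      then have "scl d1 a + scl (d2 * c1) v1 + scl (d2 * c2) v2 = 0"
        unfolding a'_def w_def by (simp add: fun_eq_iff algebra_simps)
      then have "d1 = 0" "d2 * c1 = 0" "d2 * c2 = 0" using vv(1) unfolding ind3_def by blast+
      then show False using c12 d12 by auto
    qed
    show ?thesis using cover2[OF N P a'P a'A a'0 v ba] .
  qed
qed

lemma blocking_all:
  assumes N: "2 * K + 1 \<le> N" and BA: "blocking21 TYPE('a::field) (int K) BA"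
    and BC: "blocking21 TYPE('a) (int (N - K - 1)) BC"
  shows "blocking21 TYPE('a) (int N) (BA \<union> mk2 K ` D2 K N \<union> mk3 K ` (BC \<times> fs {0..K} \<times> fs {0..K}))"
  unfolding blocking21_def
proof (intro conjI ballI allI impI)
  have KN: "K < N" using N by simp
  fix L assume L: "L \<in> BA \<union> mk2 K ` D2 K N \<union> mk3 K ` (BC \<times> fs {0..K} \<times> fs {0..K})"
  show "lin_sub (int N) 2 L"
  proof -
    { assume "L \<in> BA"
      then have "lin_sub (int K) 2 L" using BA by (simp add: blocking21_def)
      then have ?thesis using ambient_mono[of "int K" "int N"] N by (auto simp: lin_sub_def) }
    moreover
    { assume "L \<in> mk2 K ` D2 K N"
      then obtain p where "p \<in> D2 K N" "L = mk2 K p" by blast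
      then have ?thesis using set2_line[OF N] by simp }
    moreover
    { assume "L \<in> mk3 K ` (BC \<times> fs {0..K} \<times> fs {0..K})"
      then obtain l a1 a2 where "L = mk3 K (l, a1, a2)" "l \<in> BC" "a1 \<in> fs {0..K}" "a2 \<in> fs {0..K}"
        by auto
      moreover have "lin_sub (int (N - K - 1)) 2 l" using BC \<open>l \<in> BC\<close> by (simp add: blocking21_def)
      ultimately have ?thesis using set3_line[OF KN] by simp }
    ultimately show ?thesis using L by blast
  qed
next
  have KN: "K < N" using N by simp
  fix P :: "(nat \<Rightarrow> 'a) set" assume P: "lin_sub (int N) 3 P"
  let ?U = "BA \<union> mk2 K ` D2 K N \<union> mk3 K ` (BC \<times> fs {0..K} \<times> fs {0..K})"
  show "\<exists>L\<in>?U. L \<subseteq> P"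
  proof (cases "P \<subseteq> ambient (int K)")
    case True
    then have "lin_sub (int K) 3 P" using P by (simp add: lin_sub_def)
    then show ?thesis using BA unfolding blocking21_def by blast
  next
    case False
    then obtain v where v: "v \<in> P" "v \<notin> ambient (int K)" by blast
    then obtain j where j: "j > K" "v j \<noteq> 0" by (auto simp: ambient_nat)
    show ?thesis
    proof (cases "\<exists>a\<in>P. a \<in> ambient (int K) \<and> a \<noteq> 0")
      case True
      then obtain a where a: "a \<in> P" "a \<in> ambient (int K)" "a \<noteq> 0" by blast
      obtain L where "L \<in> mk2 K ` D2 K N" "L \<subseteq> P"
        using cover2b[OF N P a v(1) j(2) j(1)] by blast
      then show ?thesis by blast
    next
      case False
      then have "\<forall>v\<in>P. v \<in> ambient (int K) \<longrightarrow> v = 0" by blast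
      then obtain L where "L \<in> mk3 K ` (BC \<times> fs {0..K} \<times> fs {0..K})" "L \<subseteq> P"
        using cover3[OF KN BC P] by blast
      then show ?thesis by blast
    qed
  qed
qed

lemma main_nat:
  assumes N: "2 * K + 1 \<le> N"
  shows "fPG TYPE('a::{field,finite}) (int N) \<le> fPG TYPE('a) (int K)
     + (\<Sum>j<K+1. CARD('a) ^ j) * (CARD('a) ^ K * (\<Sum>j<N-K-1. CARD('a) ^ j))
     + fPG TYPE('a) (int (N - K - 1)) * (CARD('a) ^ (K+1) * CARD('a) ^ (K+1))"
proof -
  obtain BA where BA: "finite BA" "blocking21 TYPE('a) (int K) BA" "card BA = fPG TYPE('a) (int K)"
    using fPG_ex by blast
  obtain BC where BC: "finite BC" "blocking21 TYPE('a) (int (N - K - 1)) BC"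
    "card BC = fPG TYPE('a) (int (N - K - 1))"
    using fPG_ex by blast
  let ?S2 = "mk2 K ` (D2 K N :: ((nat \<Rightarrow> 'a) \<times> _ \<times> _) set)"
  let ?S3 = "mk3 K ` (BC \<times> (fs {0..K} :: (nat \<Rightarrow> 'a) set) \<times> (fs {0..K} :: (nat \<Rightarrow> 'a) set))"
  have fD: "finite (D2 K N :: ((nat \<Rightarrow> 'a) \<times> _ \<times> _) set)" using card_D2[OF N] by blast
  have fF: "finite (fs {0..K} :: (nat \<Rightarrow> 'a) set)" by (simp add: fs_finite)
  have c2: "card ?S2 \<le> (\<Sum>j<K+1. CARD('a) ^ j) * (CARD('a) ^ K * (\<Sum>j<N-K-1. CARD('a) ^ j))"
    using card_image_le[OF fD, of "mk2 K"] card_D2[OF N, where 'a='a] by simp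
  have c3: "card ?S3 \<le> card BC * (CARD('a) ^ (K+1) * CARD('a) ^ (K+1))"
  proof -
    have "card ?S3 \<le> card (BC \<times> (fs {0..K} :: (nat \<Rightarrow> 'a) set) \<times> (fs {0..K} :: (nat \<Rightarrow> 'a) set))"
      using BC(1) fF by (intro card_image_le) auto
    also have "\<dots> = card BC * (CARD('a) ^ (K+1) * CARD('a) ^ (K+1))"
      using card_fs[of "{0..K}", where 'a='a] by (simp add: card_cartesian_product)
    finally show ?thesis .
  qed
  have fin: "finite (BA \<union> ?S2 \<union> ?S3)" using BA(1) BC(1) fD fF by auto
  have blk: "blocking21 TYPE('a) (int N) (BA \<union> ?S2 \<union> ?S3)"
    by (rule blocking_all[OF N BA(2) BC(2)])
  have "fPG TYPE('a) (int N) \<le> card (BA \<union> ?S2 \<union> ?S3)" by (rule fPG_le[OF fin blk])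
  also have "\<dots> \<le> card BA + card ?S2 + card ?S3"
    by (meson add_le_mono card_Un_le le_trans order.refl)
  also have "\<dots> \<le> fPG TYPE('a) (int K)
     + (\<Sum>j<K+1. CARD('a) ^ j) * (CARD('a) ^ K * (\<Sum>j<N-K-1. CARD('a) ^ j))
     + fPG TYPE('a) (int (N - K - 1)) * (CARD('a) ^ (K+1) * CARD('a) ^ (K+1))"
    using add_mono[OF add_mono[OF order.refl c2] c3] unfolding BA(3) BC(3) .
  finally show ?thesis .
qed



lemma sumA: "(\<Sum>i\<in>{0..int K}. (q::int) ^ nat i) = (\<Sum>j<K+1. q ^ j)"
  by (rule sum.reindex_bij_witness[of _ int nat]) auto

lemma sumC:
  assumes "K + 1 \<le> N"
  shows "(\<Sum>j\<in>{int K..int N - 2}. (q::int) ^ nat j) = q ^ K * (\<Sum>j<N-K-1. q ^ j)"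
proof -
  have "(\<Sum>j\<in>{int K..int N - 2}. q ^ nat j) = (\<Sum>i<N-K-1. q ^ (K + i))"
    by (rule sum.reindex_bij_witness[of _ "\<lambda>i. int (K + i)" "\<lambda>j. nat j - K"]) (use assms in auto)
  also have "\<dots> = q ^ K * (\<Sum>j<N-K-1. q ^ j)"
    by (simp add: power_add sum_distrib_left)
  finally show ?thesis .
qed

theorem proposition3p32:
  fixes n k :: int
  assumes "-1 \<le> n" and "-1 \<le> k" and "2 * k \<le> n - 1"
  shows "int (fPG TYPE('a::{field,finite}) n)
    \<le> int (CARD('a)) ^ nat (2 * k + 2) * int (fPG TYPE('a) (n - k - 1))
       + int (fPG TYPE('a) k)
       + (\<Sum>i\<in>{0..k}. int (CARD('a)) ^ nat i) * (\<Sum>j\<in>{k..n - 2}. int (CARD('a)) ^ nat j)"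
proof (cases "k = -1")
  case True
  then show ?thesis by simp
next
  case False
  define K where "K = nat k"
  define N where "N = nat n"
  have kK: "k = int K" and nN: "n = int N" using False assms by (auto simp: K_def N_def)
  have KN: "2 * K + 1 \<le> N" using assms kK nN by linarith
  have e1: "n - k - 1 = int (N - K - 1)" using KN kK nN by simp
  have e2: "nat (2 * k + 2) = (K + 1) + (K + 1)" using kK by simp
  have KN1: "K + 1 \<le> N" using KN by simp
  note m = main_nat[OF KN, where 'a='a]
  let ?q = "int (CARD('a))"
  have "int (fPG TYPE('a) n) \<le> int (fPG TYPE('a) (int K)
     + (\<Sum>j<K+1. CARD('a) ^ j) * (CARD('a) ^ K * (\<Sum>j<N-K-1. CARD('a) ^ j))
     + fPG TYPE('a) (int (N - K - 1)) * (CARD('a) ^ (K+1) * CARD('a) ^ (K+1)))"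
    unfolding nN by (rule of_nat_mono[OF m])
  also have "\<dots> = ?q ^ nat (2 * k + 2) * int (fPG TYPE('a) (n - k - 1))
       + int (fPG TYPE('a) k)
       + (\<Sum>i\<in>{0..k}. ?q ^ nat i) * (\<Sum>j\<in>{k..n - 2}. ?q ^ nat j)"
    using KN unfolding e1 e2 unfolding kK nN sumA sumC[OF KN1]
    by (simp add: power_add algebra_simps)
  finally show ?thesis .
qed

end
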